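(* Let $T=(V,E)$ be an infinite spherically symmetric rooted tree with root $v_0$ and branching degrees $(d_r)_{r\ge0}$, $d_r\ge2$, $\sup_rd_r<\infty$, and let $H$, $\mathcal U_{n,r}$, $\mathcal V_n$ be as in the context. Then there are orthogonal direct sum decompositions $\ell^2(V)=\bigoplus_{n=0}^\infty\mathcal V_n=\bigoplus_{n=0}^\infty\bigoplus_{r=n}^\infty\mathcal U_{n,r}$, and for every $n\ge0$ the subspace $\mathcal V_n$ is invariant under $H$, $H^*$ and the adjacency operator $A_T$.
   Context: A rooted tree with root $v_0$ is spherically symmetric with branching degrees $(d_r)$ if every vertex at distance $r$ from $v_0$ has exactly $d_r$ neighbours at distance $r+1$. $|v|$ is the distance to $v_0$, $S_r=\{v:|v|=r\}$, $\ell^2(S_r)\subset\ell^2(V)$ the functions vanishing off $S_r$; for $v\ne v_0$, $v_-$ is the neighbour of $v$ closer to $v_0$. $H$ is the operator on $\ell^2(V)$ with $(H\xi)(v)=\xi(v_-)$ for $v\ne v_0$ and $(H\xi)(v_0)=0$; $A_T$ is the adjacency operator. Define $\mathcal U_{0,0}=\ell^2(S_0)$ and $\mathcal U_{0,r}=H^r(\mathcal U_{0,0})$ for $r\ge0$; inductively for $n\ge1$, $\mathcal U_{n,n}$ is the orthogonal complement of $\mathcal U_{0,n}\oplus\cdots\oplus\mathcal U_{n-1,n}$ in $\ell^2(S_n)$, $\mathcal U_{n,r}=H^{r-n}(\mathcal U_{n,n})$ for $r\ge n$; and $\mathcal V_n=\bigoplus_{r\ge n}\mathcal U_{n,r}$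 (closed span). *)

theory Defs
  imports "HOL-Analysis.Analysis"
begin

text \<open>Rooted tree on the vertex type 'v, given by the root v0 and the parent map par
  (par v = v_- for v \<noteq> v0; the value par v0 is irrelevant).\<close>

definition children :: "('v \<Rightarrow> 'v) \<Rightarrow> 'v \<Rightarrow> 'v \<Rightarrow> 'v set" where
  "children par v0 v = {w. w \<noteq> v0 \<and> par w = v}"

definition depth :: "('v \<Rightarrow> 'v) \<Rightarrow> 'v \<Rightarrow> 'v \<Rightarrow> nat" where
  "depth par v0 v = (LEAST n. (par ^^ n) v = v0)"

definition ell2 :: "('v \<Rightarrow> complex) set" where
  "ell2 = {f. (\<lambda>v. (cmod (f v))^2) summable_on UNIV}"

definition l2inner :: "('v \<Rightarrow> complex) \<Rightarrow> ('v \<Rightarrow> complex) \<Rightarrow> complex" where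
  "l2inner f g = infsum (\<lambda>v. cnj (f v) * g v) UNIV"

definition l2norm :: "('v \<Rightarrow> complex) \<Rightarrow> real" where
  "l2norm f = sqrt (infsum (\<lambda>v. (cmod (f v))^2) UNIV)"

definition closed_subspace :: "('v \<Rightarrow> complex) set \<Rightarrow> bool" where
  "closed_subspace W \<longleftrightarrow> W \<subseteq> ell2 \<and> (\<lambda>v. 0) \<in> W
     \<and> (\<forall>f\<in>W. \<forall>g\<in>W. (\<lambda>v. f v + g v) \<in> W)
     \<and> (\<forall>c f. f \<in> W \<longrightarrow> (\<lambda>v. c * f v) \<in> W)
     \<and> (\<forall>s f. (\<forall>k. s k \<in> W) \<and> f \<in> ell2 \<and> (\<lambda>k. l2norm (\<lambda>v. s k v - f v)) \<longlonglongrightarrow> 0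
              \<longrightarrow> f \<in> W)"

definition closed_span :: "('v \<Rightarrow> complex) set \<Rightarrow> ('v \<Rightarrow> complex) set" where
  "closed_span S = \<Inter>{W. closed_subspace W \<and> S \<subseteq> W}"

definition orth :: "('v \<Rightarrow> complex) set \<Rightarrow> ('v \<Rightarrow> complex) set \<Rightarrow> bool" where
  "orth A B \<longleftrightarrow> (\<forall>f\<in>A. \<forall>g\<in>B. l2inner f g = 0)"

definition Hop :: "('v \<Rightarrow> 'v) \<Rightarrow> 'v \<Rightarrow> ('v \<Rightarrow> complex) \<Rightarrow> ('v \<Rightarrow> complex)" where
  "Hop par v0 \<xi> = (\<lambda>v. if v = v0 then 0 else \<xi> (par v))"

definition adjacency :: "('v \<Rightarrow> 'v) \<Rightarrow> 'v \<Rightarrow> ('v \<Rightarrow> complex) \<Rightarrow> ('v \<Rightarrow> complex)" where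
  "adjacency par v0 \<xi> =
     (\<lambda>v. (if v = v0 then 0 else \<xi> (par v)) + (\<Sum>w\<in>children par v0 v. \<xi> w))"

definition is_adjoint :: "(('v \<Rightarrow> complex) \<Rightarrow> ('v \<Rightarrow> complex)) \<Rightarrow> (('v \<Rightarrow> complex) \<Rightarrow> ('v \<Rightarrow> complex)) \<Rightarrow> bool" where
  "is_adjoint K L \<longleftrightarrow> L ` ell2 \<subseteq> ell2 \<and>
     (\<forall>f\<in>ell2. \<forall>g\<in>ell2. l2inner (K f) g = l2inner f (L g))"

definition ellS :: "('v \<Rightarrow> 'v) \<Rightarrow> 'v \<Rightarrow> nat \<Rightarrow> ('v \<Rightarrow> complex) set" where
  "ellS par v0 r = {f \<in> ell2. \<forall>v. depth par v0 v \<noteq> r \<longrightarrow> f v = 0}"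

text \<open>Ulist par v0 m = [U_{0,0}, U_{1,1}, ..., U_{m,m}].\<close>
primrec Ulist :: "('v \<Rightarrow> 'v) \<Rightarrow> 'v \<Rightarrow> nat \<Rightarrow> ('v \<Rightarrow> complex) set list" where
  "Ulist par v0 0 = [ellS par v0 0]"
| "Ulist par v0 (Suc m) = Ulist par v0 m @
     [{f \<in> ellS par v0 (Suc m). \<forall>k\<le>m. \<forall>g \<in> (Hop par v0 ^^ (Suc m - k)) ` (Ulist par v0 m ! k).
          l2inner g f = 0}]"

text \<open>U_{n,r} = H^(r-n)(U_{n,n}), meaningful for r \<ge> n.\<close>
definition Usp :: "('v \<Rightarrow> 'v) \<Rightarrow> 'v \<Rightarrow> nat \<Rightarrow> nat \<Rightarrow> ('v \<Rightarrow> complex) set" where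
  "Usp par v0 n r = (Hop par v0 ^^ (r - n)) ` (Ulist par v0 n ! n)"

definition Vsp :: "('v \<Rightarrow> 'v) \<Rightarrow> 'v \<Rightarrow> nat \<Rightarrow> ('v \<Rightarrow> complex) set" where
  "Vsp par v0 n = closed_span (\<Union>r\<in>{n..}. Usp par v0 n r)"

end

theory Submission
  imports Defs "HOL-Library.Function_Algebras"
begin

definition csc :: "complex \<Rightarrow> ('a \<Rightarrow> complex) \<Rightarrow> ('a \<Rightarrow> complex)" where
  "csc c f = (\<lambda>v. c * f v)"

interpretation cvs: vector_space csc
  by unfold_locales (auto simp: csc_def fun_eq_iff algebra_simps)

definition linsub :: "('a \<Rightarrow> complex) set \<Rightarrow> bool" where
  "linsub C \<longleftrightarrow> (\<lambda>v. 0) \<in> C \<and> (\<forall>f\<in>C. \<forall>g\<in>C. (\<lambda>v. f v + g v) \<in> C)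
     \<and> (\<forall>c. \<forall>f\<in>C. (\<lambda>v. c * f v) \<in> C)"

lemma linsub_subspace: "linsub C \<Longrightarrow> cvs.subspace C"
  unfolding linsub_def cvs.subspace_def csc_def
  by (auto simp: zero_fun_def plus_fun_def)

lemma subspace_linsub: "cvs.subspace C \<Longrightarrow> linsub C"
  unfolding linsub_def cvs.subspace_def csc_def
  by (auto simp: zero_fun_def plus_fun_def)

definition pwclosed :: "('a \<Rightarrow> complex) set \<Rightarrow> bool" where
  "pwclosed C \<longleftrightarrow> (\<forall>s f. (\<forall>k. s k \<in> C) \<and> (\<forall>v. (\<lambda>k. s k v) \<longlonglongrightarrow> f v) \<longrightarrow> f \<in> C)"

lemma ell2_fin:
  assumes "finite F" "\<And>v. v \<notin> F \<Longrightarrow> f v = 0"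
  shows "f \<in> ell2"
proof -
  have "(\<lambda>v. (cmod (f v))^2) summable_on F" using assms(1) by simp
  moreover have "(\<lambda>v. (cmod (f v))^2) summable_on UNIV \<longleftrightarrow> (\<lambda>v. (cmod (f v))^2) summable_on F"
    by (rule summable_on_cong_neutral) (auto simp: assms(2))
  ultimately show ?thesis unfolding ell2_def by simp
qed

lemma infsum_fin:
  fixes g :: "'a \<Rightarrow> 'b::{comm_monoid_add,t2_space}"
  assumes "finite F" "\<And>v. v \<notin> F \<Longrightarrow> g v = 0"
  shows "infsum g UNIV = sum g F"
proof -
  have "infsum g UNIV = infsum g F"
    by (rule infsum_cong_neutral) (auto simp: assms(2))
  then show ?thesis using assms(1) by simp
qed

lemma sq_ineq1: "((a::real) + b)^2 \<le> 2 * a^2 + 2 * b^2"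
proof -
  have "0 \<le> (a - b)^2" by simp
  then show ?thesis by (simp add: power2_sum power2_diff)
qed

lemma sq_ineq2: "(a::real) \<ge> 0 \<Longrightarrow> b \<ge> 0 \<Longrightarrow> a * b \<le> a^2 + b^2"
proof -
  assume "a \<ge> 0" "b \<ge> 0"
  have "0 \<le> (a - b)^2" by simp
  then have "2 * a * b \<le> a^2 + b^2" by (simp add: power2_diff)
  moreover have "0 \<le> a * b" using \<open>a \<ge> 0\<close> \<open>b \<ge> 0\<close> by simp
  ultimately show ?thesis by linarith
qed

lemma ell2_add:
  assumes "f \<in> ell2" "g \<in> ell2"
  shows "(\<lambda>v. f v + g v) \<in> ell2"
proof -
  have s: "(\<lambda>v. 2 * (cmod (f v))^2 + 2 * (cmod (g v))^2) summable_on UNIV"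
    using assms unfolding ell2_def
    by (intro summable_on_add summable_on_cmult_right) auto
  have "(cmod (f v + g v))^2 \<le> 2 * (cmod (f v))^2 + 2 * (cmod (g v))^2" for v
  proof -
    have "cmod (f v + g v) \<le> cmod (f v) + cmod (g v)" by (rule norm_triangle_ineq)
    then have "(cmod (f v + g v))^2 \<le> (cmod (f v) + cmod (g v))^2"
      by (simp add: power_mono)
    also have "\<dots> \<le> 2 * (cmod (f v))^2 + 2 * (cmod (g v))^2"
      by (rule sq_ineq1)
    finally show ?thesis .
  qed
  then show ?thesis unfolding ell2_def mem_Collect_eq
    by (intro summable_on_comparison_test[OF s]) auto
qed

lemma ell2_scale:
  assumes "f \<in> ell2"
  shows "(\<lambda>v. c * f v) \<in> ell2"
proof -
  have "(\<lambda>v. (cmod c)^2 * (cmod (f v))^2) summable_on UNIV"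
    using assms unfolding ell2_def by (intro summable_on_cmult_right) auto
  then show ?thesis unfolding ell2_def by (simp add: norm_mult power_mult_distrib)
qed

lemma ell2_diff:
  assumes "f \<in> ell2" "g \<in> ell2"
  shows "(\<lambda>v. f v - g v) \<in> ell2"
  using ell2_add[OF assms(1) ell2_scale[OF assms(2), of "-1"]] by simp

lemma ell2_zero: "(\<lambda>v. 0) \<in> ell2"
  by (rule ell2_fin[of "{}"]) auto

lemma ell2_pt:
  assumes "h \<in> ell2"
  shows "cmod (h v) \<le> l2norm h"
proof -
  have "sum (\<lambda>v. (cmod (h v))^2) {v} \<le> infsum (\<lambda>v. (cmod (h v))^2) UNIV"
    using assms unfolding ell2_def by (intro finite_sum_le_infsum) auto
  then show ?thesis unfolding l2norm_def by (simp add: real_le_rsqrt)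
qed

lemma pw_conv:
  assumes "\<And>k. s k \<in> ell2" "f \<in> ell2" "(\<lambda>k. l2norm (\<lambda>v. s k v - f v)) \<longlonglongrightarrow> 0"
  shows "(\<lambda>k. s k v) \<longlonglongrightarrow> f v"
proof -
  have "(\<lambda>k. s k v - f v) \<longlonglongrightarrow> 0"
  proof (rule Lim_null_comparison[OF _ assms(3)])
    show "\<forall>\<^sub>F k in sequentially. norm (s k v - f v) \<le> l2norm (\<lambda>v. s k v - f v)"
      using ell2_pt[OF ell2_diff[OF assms(1) assms(2)]] by auto
  qed
  then show ?thesis by (simp add: LIM_zero_iff)
qed

lemma prod_summable:
  assumes "f \<in> ell2" "g \<in> ell2"
  shows "(\<lambda>v. cnj (f v) * g v) summable_on UNIV"
proof (rule abs_summable_summable)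
  have s: "(\<lambda>v. (cmod (f v))^2 + (cmod (g v))^2) summable_on UNIV"
    using assms unfolding ell2_def by (intro summable_on_add) auto
  have "norm (cnj (f v) * g v) \<le> (cmod (f v))^2 + (cmod (g v))^2" for v
  proof -
    have "norm (cnj (f v) * g v) = cmod (f v) * cmod (g v)" by (simp add: norm_mult)
    also have "\<dots> \<le> (cmod (f v))^2 + (cmod (g v))^2"
      by (rule sq_ineq2) auto
    finally show ?thesis .
  qed
  then show "(\<lambda>v. norm (cnj (f v) * g v)) summable_on UNIV"
    by (intro summable_on_comparison_test[OF s]) auto
qed

lemma exhaust_lim:
  fixes h :: "'a \<Rightarrow> 'b::{comm_monoid_add,topological_space}"
  assumes "(h has_sum s) UNIV" "\<And>R. finite (B R)"
    "\<And>X. finite X \<Longrightarrow> \<exists>R0. \<forall>R\<ge>R0. X \<subseteq> B R"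
  shows "(\<lambda>R. sum h (B R)) \<longlonglongrightarrow> s"
proof -
  have f: "filterlim B (finite_subsets_at_top UNIV) sequentially"
    unfolding filterlim_finite_subsets_at_top
  proof (intro allI impI)
    fix X :: "'a set" assume "finite X \<and> X \<subseteq> UNIV"
    then obtain R0 where "\<forall>R\<ge>R0. X \<subseteq> B R" using assms(3) by blast
    then show "\<forall>\<^sub>F R in sequentially. finite (B R) \<and> X \<subseteq> B R \<and> B R \<subseteq> UNIV"
      using assms(2) eventually_sequentially by blast
  qed
  have "(sum h \<longlongrightarrow> s) (finite_subsets_at_top UNIV)"
    using assms(1) by (simp add: has_sum_def)
  from filterlim_compose[OF this f] show ?thesis .
qed

locale sst =
  fixes par :: "'v \<Rightarrow> 'v" and v0 :: 'v and d :: "nat \<Rightarrow> nat"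
  assumes rooted: "\<forall>v. \<exists>n. (par ^^ n) v = v0"
    and sph: "\<forall>v. finite (children par v0 v) \<and> card (children par v0 v) = d (depth par v0 v)"
    and deg2: "\<forall>r. 2 \<le> d r"
    and bdd: "\<exists>M. \<forall>r. d r \<le> M"
begin

abbreviation "dep \<equiv> depth par v0"
abbreviation "H \<equiv> Hop par v0"
abbreviation "ch \<equiv> children par v0"

lemma dep_prop: "(par ^^ dep v) v = v0"
  unfolding depth_def by (rule LeastI_ex) (use rooted in blast)

lemma dep_le: "(par ^^ n) v = v0 \<Longrightarrow> dep v \<le> n"
  unfolding depth_def by (rule Least_le)

lemma dep_v0[simp]: "dep v0 = 0"
  using dep_le[of 0 v0] by simp

lemma dep0_iff: "dep v = 0 \<longleftrightarrow> v = v0"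
  using dep_prop[of v] by auto

lemma dep_par: assumes "v \<noteq> v0" shows "dep v = Suc (dep (par v))"
proof -
  obtain j where j: "dep v = Suc j" using assms dep0_iff by (cases "dep v") auto
  have "(par ^^ j) (par v) = v0" using dep_prop[of v] j by (simp add: funpow_swap1)
  then have a: "dep (par v) \<le> j" by (rule dep_le)
  have "(par ^^ Suc (dep (par v))) v = v0" using dep_prop[of "par v"] by (simp add: funpow_swap1)
  then have "dep v \<le> Suc (dep (par v))" by (rule dep_le)
  then show ?thesis using a j by simp
qed

lemma ch_iff: "w \<in> ch u \<longleftrightarrow> w \<noteq> v0 \<and> par w = u"
  by (simp add: children_def)

lemma ch_dep: "w \<in> ch u \<Longrightarrow> dep w = Suc (dep u)"
  using dep_par ch_iff by auto

lemma ch_fin: "finite (ch u)" using sph by blast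

lemma ch_card: "card (ch u) = d (dep u)" using sph by blast

lemma ch_ne: "ch u \<noteq> {}"
  using ch_card[of u] deg2 by (metis card.empty not_numeral_le_zero)

lemma S_Suc: "{v. dep v = Suc r} = (\<Union>u\<in>{u. dep u = r}. ch u)"
proof safe
  fix v assume "dep v = Suc r"
  then have "v \<noteq> v0" by auto
  then show "v \<in> (\<Union>u\<in>{u. dep u = r}. ch u)"
    using dep_par[of v] \<open>dep v = Suc r\<close> ch_iff by auto
qed (auto simp: ch_dep)

lemma finite_S: "finite {v. dep v = r}"
proof (induction r)
  case 0
  then show ?case using dep0_iff by simp
next
  case (Suc r)
  then show ?case unfolding S_Suc using ch_fin by auto
qed

lemma finite_B: "finite {v. dep v < R}"
proof -
  have "{v. dep v < R} = (\<Union>r<R. {v. dep v = r})" by auto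
  then show ?thesis using finite_S by auto
qed

lemma desc: "\<exists>w. dep w = dep u + j \<and> (par ^^ j) w = u"
proof (induction j)
  case 0
  then show ?case by auto
next
  case (Suc j)
  then obtain w where w: "dep w = dep u + j" "(par ^^ j) w = u" by blast
  obtain c where c: "c \<in> ch w" using ch_ne by blast
  then have "dep c = dep u + Suc j" using ch_dep w by simp
  moreover have "(par ^^ Suc j) c = u" using c w ch_iff by (simp add: funpow_swap1)
  ultimately show ?case by blast
qed

lemma dep_parpow: "j \<le> dep v \<Longrightarrow> dep ((par ^^ j) v) = dep v - j"
proof (induction j arbitrary: v)
  case 0
  then show ?case by simp
next
  case (Suc j)
  then have "v \<noteq> v0" using dep0_iff by auto
  then have "dep (par v) = dep v - 1" using dep_par by simp
  then show ?case using Suc.IH[of "par v"] Suc.prems by (simp add: funpow_swap1)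
qed

lemma Hpow: "(H ^^ j) f v = (if j \<le> dep v then f ((par ^^ j) v) else 0)"
proof (induction j arbitrary: v)
  case 0
  then show ?case by simp
next
  case (Suc j)
  show ?case
  proof (cases "v = v0")
    case True
    then show ?thesis by (simp add: Hop_def)
  next
    case False
    then have "dep v = Suc (dep (par v))" by (rule dep_par)
    then show ?thesis using False Suc.IH[of "par v"] by (simp add: Hop_def funpow_swap1)
  qed
qed

lemma H_apply: "H f v = (if v = v0 then 0 else f (par v))"
  by (simp add: Hop_def)

end

context sst begin

definition "eS r = {f. \<forall>v. dep v \<noteq> r \<longrightarrow> f v = 0}"
definition "ip r f g = (\<Sum>v\<in>{v. dep v = r}. cnj (f v) * g v)"
definition "UU n = Ulist par v0 n ! n"
definition "restr r f = (\<lambda>v. if dep v = r then f v else 0)"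

lemma eS_ell2: "f \<in> eS r \<Longrightarrow> f \<in> ell2"
  by (rule ell2_fin[OF finite_S[of r]]) (auto simp: eS_def)

lemma ellS_eq: "ellS par v0 r = eS r"
  using eS_ell2 unfolding ellS_def by (auto simp: eS_def)

lemma l2inner_eS1: "f \<in> eS r \<Longrightarrow> l2inner f g = ip r f g"
  unfolding l2inner_def ip_def by (rule infsum_fin[OF finite_S]) (auto simp: eS_def)

lemma l2inner_eS2: "g \<in> eS r \<Longrightarrow> l2inner f g = ip r f g"
  unfolding l2inner_def ip_def by (rule infsum_fin[OF finite_S]) (auto simp: eS_def)

lemma linsub_eS: "linsub (eS r)"
  unfolding linsub_def eS_def by auto

lemma pwclosed_eS: "pwclosed (eS r)"
  unfolding pwclosed_def
proof (intro allI impI)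
  fix s :: "nat \<Rightarrow> 'v \<Rightarrow> complex" and f :: "'v \<Rightarrow> complex"
  assume a: "(\<forall>k. s k \<in> eS r) \<and> (\<forall>v. (\<lambda>k. s k v) \<longlonglongrightarrow> f v)"
  show "f \<in> eS r" unfolding eS_def
  proof (intro CollectI allI impI)
    fix v assume "dep v \<noteq> r"
    then have "(\<lambda>k. s k v) = (\<lambda>k. 0)" using a by (auto simp: eS_def)
    then have "(\<lambda>k. 0::complex) \<longlonglongrightarrow> f v" using a by metis
    then show "f v = 0" by (simp add: LIMSEQ_const_iff)
  qed
qed

lemma Ulist_len: "length (Ulist par v0 m) = Suc m"
  by (induction m) auto

lemma Ulist_nth: "k \<le> m \<Longrightarrow> Ulist par v0 m ! k = UU k"
proof (induction m)
  case 0
  then show ?case by (simp add: UU_def)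
next
  case (Suc m)
  show ?case
  proof (cases "k = Suc m")
    case True
    then show ?thesis by (simp add: UU_def)
  next
    case False
    then have "k \<le> m" using Suc.prems by simp
    then show ?thesis using Suc.IH Ulist_len[of m] by (simp add: nth_append)
  qed
qed

lemma UU_0: "UU 0 = eS 0"
  by (simp add: UU_def ellS_eq)

lemma UU_Suc: "UU (Suc m) = {f \<in> eS (Suc m). \<forall>k\<le>m. \<forall>g \<in> (H ^^ (Suc m - k)) ` UU k.
          l2inner g f = 0}"
proof -
  have "UU (Suc m) = {f \<in> ellS par v0 (Suc m). \<forall>k\<le>m. \<forall>g \<in> (H ^^ (Suc m - k)) ` (Ulist par v0 m ! k).
          l2inner g f = 0}"
    unfolding UU_def using Ulist_len[of m] by (simp add: nth_append)
  also have "\<dots> = {f \<in> eS (Suc m). \<forall>k\<le>m. \<forall>g \<in> (H ^^ (Suc m - k)) ` UU k.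
          l2inner g f = 0}"
    using Ulist_nth by (auto simp: ellS_eq)
  finally show ?thesis .
qed

lemma Usp_UU: "Usp par v0 n r = (H ^^ (r - n)) ` UU n"
  by (simp add: Usp_def UU_def)

lemma Hpow_eS: "f \<in> eS n \<Longrightarrow> (H ^^ j) f \<in> eS (n + j)"
  unfolding eS_def Hpow by (auto simp: dep_parpow)

lemma H_eS: "f \<in> eS n \<Longrightarrow> H f \<in> eS (Suc n)"
  using Hpow_eS[of f n 1] by simp

lemma UU_eS: "UU n \<subseteq> eS n"
  by (cases n) (auto simp: UU_0 UU_Suc)

lemma Usp_eS: "n \<le> r \<Longrightarrow> Usp par v0 n r \<subseteq> eS r"
  unfolding Usp_UU using UU_eS Hpow_eS[of _ n "r - n"] by auto

lemma Hpow_add: "(H ^^ j) (\<lambda>v. f v + g v) = (\<lambda>v. (H ^^ j) f v + (H ^^ j) g v)"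
  by (auto simp: Hpow fun_eq_iff)
lemma Hpow_scale: "(H ^^ j) (\<lambda>v. c * f v) = (\<lambda>v. c * (H ^^ j) f v)"
  by (auto simp: Hpow fun_eq_iff)
lemma Hpow_zero: "(H ^^ j) (\<lambda>v. 0) = (\<lambda>v. 0)"
  by (auto simp: Hpow fun_eq_iff)

lemma ip_add: "ip r g (\<lambda>v. f1 v + f2 v) = ip r g f1 + ip r g f2"
  by (simp add: ip_def sum.distrib distrib_left)
lemma ip_scale: "ip r g (\<lambda>v. c * f v) = c * ip r g f"
  by (simp add: ip_def sum_distrib_left algebra_simps)
lemma ip_zero: "ip r g (\<lambda>v. 0) = 0"
  by (simp add: ip_def)
lemma ip_cnj: "ip r g f = cnj (ip r f g)"
  by (simp add: ip_def mult.commute)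

lemma UU_Suc': "UU (Suc m) = {f \<in> eS (Suc m). \<forall>k\<le>m. \<forall>a\<in>UU k. ip (Suc m) ((H ^^ (Suc m - k)) a) f = 0}"
proof -
  have *: "l2inner ((H ^^ (Suc m - k)) a) f = ip (Suc m) ((H ^^ (Suc m - k)) a) f" if "a \<in> UU k" "k \<le> m" for k a f
  proof -
    have "a \<in> eS k" using that UU_eS by blast
    then have "(H ^^ (Suc m - k)) a \<in> eS (k + (Suc m - k))" by (rule Hpow_eS)
    then have "(H ^^ (Suc m - k)) a \<in> eS (Suc m)" using that(2) by simp
    then show ?thesis by (rule l2inner_eS1)
  qed
  show ?thesis unfolding UU_Suc by (auto simp: *)
qed

lemma linsub_UU: "linsub (UU n)"
proof (cases n)
  case 0
  then show ?thesis by (simp add: UU_0 linsub_eS)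
next
  case (Suc m)
  have L: "linsub (eS (Suc m))" by (rule linsub_eS)
  show ?thesis unfolding Suc UU_Suc' linsub_def
  proof (intro conjI ballI allI)
    show "(\<lambda>v. 0) \<in> {f \<in> eS (Suc m). \<forall>k\<le>m. \<forall>a\<in>UU k. ip (Suc m) ((H ^^ (Suc m - k)) a) f = 0}"
      using L by (simp add: linsub_def ip_zero)
  next
    fix f g assume "f \<in> {f \<in> eS (Suc m). \<forall>k\<le>m. \<forall>a\<in>UU k. ip (Suc m) ((H ^^ (Suc m - k)) a) f = 0}"
      "g \<in> {f \<in> eS (Suc m). \<forall>k\<le>m. \<forall>a\<in>UU k. ip (Suc m) ((H ^^ (Suc m - k)) a) f = 0}"
    then show "(\<lambda>v. f v + g v) \<in> {f \<in> eS (Suc m). \<forall>k\<le>m. \<forall>a\<in>UU k. ip (Suc m) ((H ^^ (Suc m - k)) a) f = 0}"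
      using L unfolding linsub_def by (simp add: ip_add)
  next
    fix c f assume "f \<in> {f \<in> eS (Suc m). \<forall>k\<le>m. \<forall>a\<in>UU k. ip (Suc m) ((H ^^ (Suc m - k)) a) f = 0}"
    then show "(\<lambda>v. c * f v) \<in> {f \<in> eS (Suc m). \<forall>k\<le>m. \<forall>a\<in>UU k. ip (Suc m) ((H ^^ (Suc m - k)) a) f = 0}"
      using L unfolding linsub_def by (simp add: ip_scale)
  qed
qed

lemma linsub_Usp: "linsub (Usp par v0 n r)"
  unfolding linsub_def Usp_UU
proof (intro conjI ballI allI)
  have L: "linsub (UU n)" by (rule linsub_UU)
  have "(\<lambda>v. 0) \<in> UU n" using L unfolding linsub_def by blast
  then have "(H ^^ (r - n)) (\<lambda>v. 0) \<in> (H ^^ (r - n)) ` UU n" by (rule imageI)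
  then show "(\<lambda>v. 0) \<in> (H ^^ (r - n)) ` UU n" by (simp only: Hpow_zero)
  fix f g assume "f \<in> (H ^^ (r - n)) ` UU n" "g \<in> (H ^^ (r - n)) ` UU n"
  then obtain a b where "a \<in> UU n" "b \<in> UU n" "f = (H ^^ (r - n)) a" "g = (H ^^ (r - n)) b" by auto
  moreover have "(\<lambda>v. a v + b v) \<in> UU n" using L \<open>a \<in> UU n\<close> \<open>b \<in> UU n\<close> unfolding linsub_def by blast
  then have "(H ^^ (r - n)) (\<lambda>v. a v + b v) \<in> (H ^^ (r - n)) ` UU n" by (rule imageI)
  ultimately show "(\<lambda>v. f v + g v) \<in> (H ^^ (r - n)) ` UU n" by (simp only: Hpow_add)
next
  have L: "linsub (UU n)" by (rule linsub_UU)
  fix c f assume "f \<in> (H ^^ (r - n)) ` UU n"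
  then obtain a where "a \<in> UU n" "f = (H ^^ (r - n)) a" by auto
  moreover have "(\<lambda>v. c * a v) \<in> UU n" using L \<open>a \<in> UU n\<close> unfolding linsub_def by blast
  then have "(H ^^ (r - n)) (\<lambda>v. c * a v) \<in> (H ^^ (r - n)) ` UU n" by (rule imageI)
  ultimately show "(\<lambda>v. c * f v) \<in> (H ^^ (r - n)) ` UU n" by (simp only: Hpow_scale)
qed

lemma ip_H:
  assumes "f \<in> eS r" "g \<in> eS r"
  shows "ip (Suc r) (H f) (H g) = of_nat (d r) * ip r f g"
proof -
  have "ip (Suc r) (H f) (H g) = (\<Sum>u\<in>{u. dep u = r}. \<Sum>w\<in>ch u. cnj (H f w) * H g w)"
    unfolding ip_def S_Suc
    by (rule sum.UNION_disjoint) (auto simp: finite_S ch_fin ch_iff)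
  also have "\<dots> = (\<Sum>u\<in>{u. dep u = r}. of_nat (card (ch u)) * (cnj (f u) * g u))"
    by (intro sum.cong refl) (auto simp: H_apply ch_iff)
  also have "\<dots> = (\<Sum>u\<in>{u. dep u = r}. of_nat (d r) * (cnj (f u) * g u))"
    by (intro sum.cong refl) (auto simp: ch_card)
  also have "\<dots> = of_nat (d r) * ip r f g"
    by (simp add: ip_def sum_distrib_left)
  finally show ?thesis .
qed

lemma ip_Hpow:
  assumes "f \<in> eS r" "g \<in> eS r"
  shows "\<exists>c. c \<noteq> 0 \<and> ip (r + j) ((H ^^ j) f) ((H ^^ j) g) = c * ip r f g"
proof (induction j)
  case 0
  then show ?case by (intro exI[of _ 1]) simp
next
  case (Suc j)
  then obtain c where c: "c \<noteq> 0" "ip (r + j) ((H ^^ j) f) ((H ^^ j) g) = c * ip r f g" by blast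
  have "ip (Suc (r + j)) (H ((H ^^ j) f)) (H ((H ^^ j) g)) = of_nat (d (r + j)) * ip (r + j) ((H ^^ j) f) ((H ^^ j) g)"
    using Hpow_eS assms by (intro ip_H) auto
  moreover have "of_nat (d (r + j)) \<noteq> (0::complex)" using deg2 by (metis not_numeral_le_zero of_nat_eq_0_iff)
  ultimately show ?case using c by (intro exI[of _ "of_nat (d (r + j)) * c"]) simp
qed

lemma Usp_orth_same:
  assumes "n < n'" "n' \<le> r" "f \<in> Usp par v0 n r" "g \<in> Usp par v0 n' r"
  shows "ip r f g = 0"
proof -
  obtain a where a: "a \<in> UU n" "f = (H ^^ (r - n)) a" using assms(3) unfolding Usp_UU by auto
  obtain b where b: "b \<in> UU n'" "g = (H ^^ (r - n')) b" using assms(4) unfolding Usp_UU by auto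
  obtain m where m: "n' = Suc m" using assms(1) by (cases n') auto
  have "l2inner ((H ^^ (n' - n)) a) b = 0"
    using b(1) a(1) assms(1) unfolding m UU_Suc by auto
  moreover have "b \<in> eS n'" using b(1) UU_eS by auto
  ultimately have z: "ip n' ((H ^^ (n' - n)) a) b = 0" by (simp add: l2inner_eS2)
  have "(H ^^ (n' - n)) a \<in> eS n'" using Hpow_eS[of a n "n' - n"] a(1) UU_eS assms(1) by auto
  then obtain c where "ip (n' + (r - n')) ((H ^^ (r - n')) ((H ^^ (n' - n)) a)) ((H ^^ (r - n')) b)
      = c * ip n' ((H ^^ (n' - n)) a) b"
    using ip_Hpow \<open>b \<in> eS n'\<close> by blast
  moreover have "(H ^^ (r - n')) ((H ^^ (n' - n)) a) = f"
    using a(2) assms(1,2) by (simp add: funpow_add[symmetric, THEN fun_cong, simplified])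
  ultimately show ?thesis using z b(2) assms(2) by simp
qed

lemma Usp_orth:
  assumes "n \<le> r" "n' \<le> r'" "(n, r) \<noteq> (n', r')" "f \<in> Usp par v0 n r" "g \<in> Usp par v0 n' r'"
  shows "l2inner f g = 0"
proof (cases "r = r'")
  case True
  have f: "f \<in> eS r" and g: "g \<in> eS r" using assms Usp_eS True by auto
  have "n \<noteq> n'" using assms(3) True by auto
  then consider "n < n'" | "n' < n" by linarith
  then show ?thesis
  proof cases
    case 1
    then show ?thesis using Usp_orth_same[of n n' r f g] assms True by (simp add: l2inner_eS1[OF f])
  next
    case 2
    then have "ip r g f = 0" using Usp_orth_same[of n' n r g f] assms True by simp
    then show ?thesis using ip_cnj[of r f g] by (simp add: l2inner_eS1[OF f])
  qed
next
  case False
  have f: "f \<in> eS r" and g: "g \<in> eS r'" using assms Usp_eS by auto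
  have "(\<lambda>v. cnj (f v) * g v) = (\<lambda>v. 0)" using f g False unfolding eS_def by (auto simp: fun_eq_iff)
  then show ?thesis unfolding l2inner_def by simp
qed

end

lemma fin_summable:
  fixes h :: "'a \<Rightarrow> 'b::{comm_monoid_add,topological_space}"
  assumes "finite F" "\<And>v. v \<notin> F \<Longrightarrow> h v = 0"
  shows "h summable_on UNIV"
proof -
  have "h summable_on F" using assms(1) by simp
  moreover have "h summable_on UNIV \<longleftrightarrow> h summable_on F"
    by (rule summable_on_cong_neutral) (auto simp: assms(2))
  ultimately show ?thesis by simp
qed

lemma cs_ell2: "closed_subspace W \<Longrightarrow> W \<subseteq> ell2"
  by (simp add: closed_subspace_def)
lemma cs_zero: "closed_subspace W \<Longrightarrow> (\<lambda>v. 0) \<in> W"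
  by (simp add: closed_subspace_def)
lemma cs_add: "closed_subspace W \<Longrightarrow> f \<in> W \<Longrightarrow> g \<in> W \<Longrightarrow> (\<lambda>v. f v + g v) \<in> W"
  by (simp add: closed_subspace_def)
lemma cs_scale: "closed_subspace W \<Longrightarrow> f \<in> W \<Longrightarrow> (\<lambda>v. c * f v) \<in> W"
  by (simp add: closed_subspace_def)
lemma cs_lim: "closed_subspace W \<Longrightarrow> (\<And>k. s k \<in> W) \<Longrightarrow> f \<in> ell2 \<Longrightarrow>
   (\<lambda>k. l2norm (\<lambda>v. s k v - f v)) \<longlonglongrightarrow> 0 \<Longrightarrow> f \<in> W"
  unfolding closed_subspace_def by blast
lemma csI:
  assumes "W \<subseteq> ell2" "(\<lambda>v. 0) \<in> W" "\<And>f g. f \<in> W \<Longrightarrow> g \<in> W \<Longrightarrow> (\<lambda>v. f v + g v) \<in> W"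
    "\<And>c f. f \<in> W \<Longrightarrow> (\<lambda>v. c * f v) \<in> W"
    "\<And>s f. (\<And>k. s k \<in> W) \<Longrightarrow> f \<in> ell2 \<Longrightarrow> (\<lambda>k. l2norm (\<lambda>v. s k v - f v)) \<longlonglongrightarrow> 0 \<Longrightarrow> f \<in> W"
  shows "closed_subspace W"
  unfolding closed_subspace_def using assms by blast

lemma closed_ell2: "closed_subspace ell2"
  by (rule csI) (use ell2_zero ell2_add ell2_scale in auto)

lemma closed_Inter:
  assumes "F \<noteq> {}" "\<And>W. W \<in> F \<Longrightarrow> closed_subspace W"
  shows "closed_subspace (\<Inter>F)"
proof (rule csI)
  obtain W0 where "W0 \<in> F" using assms(1) by blast
  then show "\<Inter>F \<subseteq> ell2" using cs_ell2[OF assms(2)[of W0]] by blast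
  show "(\<lambda>v. 0) \<in> \<Inter>F" using cs_zero[OF assms(2)] by blast
  show "(\<lambda>v. f v + g v) \<in> \<Inter>F" if "f \<in> \<Inter>F" "g \<in> \<Inter>F" for f g
    using cs_add[OF assms(2)] that by blast
  show "(\<lambda>v. c * f v) \<in> \<Inter>F" if "f \<in> \<Inter>F" for f c
    using cs_scale[OF assms(2)] that by blast
  show "f \<in> \<Inter>F" if "\<And>k. s k \<in> \<Inter>F" "f \<in> ell2" "(\<lambda>k. l2norm (\<lambda>v. s k v - f v)) \<longlonglongrightarrow> 0" for s f
  proof
    fix W assume W: "W \<in> F"
    have "s k \<in> W" for k using that(1)[of k] W by blast
    then show "f \<in> W" using cs_lim[OF assms(2)[OF W]] that(2,3) by blast
  qed
qed

lemma closed_span_closed: "S \<subseteq> ell2 \<Longrightarrow> closed_subspace (closed_span S)"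
  unfolding closed_span_def using closed_ell2 by (intro closed_Inter) auto

lemma closed_span_sup: "S \<subseteq> closed_span S"
  unfolding closed_span_def by blast

lemma closed_span_least: "closed_subspace W \<Longrightarrow> S \<subseteq> W \<Longrightarrow> closed_span S \<subseteq> W"
  unfolding closed_span_def by blast

lemma closed_linsub: "closed_subspace C \<Longrightarrow> linsub C"
  unfolding linsub_def using cs_zero cs_add cs_scale by blast

lemma closed_from_pw:
  assumes "linsub C" "C \<subseteq> ell2" "pwclosed C"
  shows "closed_subspace C"
proof (rule csI)
  fix s f assume a: "\<And>k. s k \<in> C" "f \<in> ell2" "(\<lambda>k. l2norm (\<lambda>v. s k v - f v)) \<longlonglongrightarrow> 0"
  then have "(\<lambda>k. s k v) \<longlonglongrightarrow> f v" for v using assms(2) by (intro pw_conv) auto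
  then show "f \<in> C" using assms(3) a unfolding pwclosed_def by blast
qed (use assms in \<open>auto simp: linsub_def\<close>)

lemma pwclosed_zero: "pwclosed {\<lambda>v. 0}"
  unfolding pwclosed_def
proof (intro allI impI)
  fix s :: "nat \<Rightarrow> 'a \<Rightarrow> complex" and f :: "'a \<Rightarrow> complex"
  assume a: "(\<forall>k. s k \<in> {\<lambda>v. 0}) \<and> (\<forall>v. (\<lambda>k. s k v) \<longlonglongrightarrow> f v)"
  have "f v = 0" for v
  proof -
    have "(\<lambda>k. s k v) = (\<lambda>k. 0)" using a by auto
    then have "(\<lambda>k. 0::complex) \<longlonglongrightarrow> f v" using a by metis
    then show "f v = 0" by (simp add: LIMSEQ_const_iff)
  qed
  then show "f \<in> {\<lambda>v. 0}" by auto
qed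

context sst begin

lemma ip_tendsto: "(\<forall>v. (\<lambda>k. s k v) \<longlonglongrightarrow> f v) \<Longrightarrow> (\<lambda>k. ip r g (s k)) \<longlonglongrightarrow> ip r g f"
  unfolding ip_def by (intro tendsto_intros) auto

lemma pwclosed_UU: "pwclosed (UU n)"
proof (cases n)
  case 0
  then show ?thesis by (simp add: UU_0 pwclosed_eS)
next
  case (Suc m)
  show ?thesis unfolding Suc pwclosed_def
  proof (intro allI impI)
    fix s :: "nat \<Rightarrow> 'v \<Rightarrow> complex" and f :: "'v \<Rightarrow> complex"
    assume a: "(\<forall>k. s k \<in> UU (Suc m)) \<and> (\<forall>v. (\<lambda>k. s k v) \<longlonglongrightarrow> f v)"
    have "f \<in> eS (Suc m)" using pwclosed_eS[of "Suc m"] a UU_eS unfolding pwclosed_def by blast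
    moreover have "ip (Suc m) ((H ^^ (Suc m - k)) b) f = 0" if "k \<le> m" "b \<in> UU k" for k b
    proof -
      have "(\<lambda>i. ip (Suc m) ((H ^^ (Suc m - k)) b) (s i)) = (\<lambda>i. 0)"
        using a that unfolding UU_Suc' by auto
      moreover have "(\<lambda>i. ip (Suc m) ((H ^^ (Suc m - k)) b) (s i)) \<longlonglongrightarrow> ip (Suc m) ((H ^^ (Suc m - k)) b) f"
        using a by (intro ip_tendsto) auto
      ultimately show ?thesis by (simp add: LIMSEQ_const_iff)
    qed
    ultimately show "f \<in> UU (Suc m)" unfolding UU_Suc' by auto
  qed
qed

lemma pwclosed_Usp:
  assumes "n \<le> r"
  shows "pwclosed (Usp par v0 n r)"
  unfolding pwclosed_def Usp_UU
proof (intro allI impI)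
  fix s :: "nat \<Rightarrow> 'v \<Rightarrow> complex" and f :: "'v \<Rightarrow> complex"
  assume a: "(\<forall>k. s k \<in> (H ^^ (r - n)) ` UU n) \<and> (\<forall>v. (\<lambda>k. s k v) \<longlonglongrightarrow> f v)"
  define j where "j = r - n"
  have "\<forall>k. \<exists>b. b \<in> UU n \<and> s k = (H ^^ j) b" using a j_def by blast
  then obtain A where A: "\<And>k. A k \<in> UU n" "\<And>k. s k = (H ^^ j) (A k)" by metis
  define w where "w u = (SOME w. dep w = dep u + j \<and> (par ^^ j) w = u)" for u
  have w: "dep (w u) = dep u + j \<and> (par ^^ j) (w u) = u" for u
    unfolding w_def by (rule someI_ex) (rule desc)
  define b where "b u = (if dep u = n then f (w u) else 0)" for u
  have Ak: "A k u = (if dep u = n then s k (w u) else 0)" for k u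
  proof (cases "dep u = n")
    case True
    then show ?thesis using A(2)[of k] w[of u] by (simp add: Hpow)
  next
    case False
    then show ?thesis using A(1)[of k] UU_eS unfolding eS_def by auto
  qed
  have "(\<lambda>k. A k u) \<longlonglongrightarrow> b u" for u
    unfolding Ak b_def using a by (cases "dep u = n") auto
  then have bU: "b \<in> UU n" using pwclosed_UU[of n] A(1) unfolding pwclosed_def by blast
  have "f v = (H ^^ j) b v" for v
  proof -
    have "(\<lambda>k. s k v) = (\<lambda>k. if j \<le> dep v then A k ((par ^^ j) v) else 0)"
      using A(2) by (simp add: Hpow)
    moreover have "(\<lambda>k. if j \<le> dep v then A k ((par ^^ j) v) else 0) \<longlonglongrightarrow> (if j \<le> dep v then b ((par ^^ j) v) else 0)"
      using \<open>\<And>u. (\<lambda>k. A k u) \<longlonglongrightarrow> b u\<close> by (cases "j \<le> dep v") auto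
    ultimately have "(\<lambda>k. s k v) \<longlonglongrightarrow> (H ^^ j) b v" by (simp add: Hpow)
    then show ?thesis using a LIMSEQ_unique by blast
  qed
  then have "f = (H ^^ j) b" by auto
  then show "f \<in> (H ^^ (r - n)) ` UU n" using bU j_def by blast
qed

lemma Usp_closed: "n \<le> r \<Longrightarrow> closed_subspace (Usp par v0 n r)"
  by (intro closed_from_pw linsub_Usp pwclosed_Usp) (use Usp_eS eS_ell2 in blast)+

definition "W n = {f \<in> ell2. \<forall>r. (r < n \<longrightarrow> restr r f = (\<lambda>v. 0)) \<and> (n \<le> r \<longrightarrow> restr r f \<in> Usp par v0 n r)}"

lemma restr_add: fixes f g :: "'v \<Rightarrow> complex" shows "restr r (\<lambda>v. f v + g v) = (\<lambda>v. restr r f v + restr r g v)"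
  by (auto simp: restr_def fun_eq_iff)
lemma restr_scale: fixes f :: "'v \<Rightarrow> complex" shows "restr r (\<lambda>v. c * f v) = (\<lambda>v. c * restr r f v)"
  by (auto simp: restr_def fun_eq_iff)
lemma restr_zero: "restr r (\<lambda>v. 0) = (\<lambda>v. 0)"
  by (auto simp: restr_def)
lemma restr_tendsto: "(\<forall>v. (\<lambda>k. s k v) \<longlonglongrightarrow> f v) \<Longrightarrow> (\<lambda>k. restr r (s k) v) \<longlonglongrightarrow> restr r f v"
  unfolding restr_def by (cases "dep v = r") auto
lemma restr_eS: "restr r f \<in> eS r"
  by (auto simp: restr_def eS_def)

lemma W_linsub: "linsub (W n)"
proof -
  have U: "linsub (Usp par v0 n r)" for r by (rule linsub_Usp)
  have z: "(\<lambda>v. 0) \<in> W n"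
    unfolding W_def using ell2_zero U by (simp add: restr_zero linsub_def)
  have a: "(\<lambda>v. f v + g v) \<in> W n" if "f \<in> W n" "g \<in> W n" for f g
  proof -
    have "f \<in> ell2" "g \<in> ell2" using that by (auto simp: W_def)
    then have "(\<lambda>v. f v + g v) \<in> ell2" by (rule ell2_add)
    moreover have "restr r (\<lambda>v. f v + g v) = (\<lambda>v. 0)" if "r < n" for r
      using \<open>f \<in> W n\<close> \<open>g \<in> W n\<close> that by (simp add: W_def restr_add)
    moreover have "restr r (\<lambda>v. f v + g v) \<in> Usp par v0 n r" if "n \<le> r" for r
    proof -
      have "restr r f \<in> Usp par v0 n r" "restr r g \<in> Usp par v0 n r"
        using \<open>f \<in> W n\<close> \<open>g \<in> W n\<close> that by (auto simp: W_def)
      then show ?thesis using U[of r] unfolding linsub_def restr_add by blast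
    qed
    ultimately show ?thesis unfolding W_def by blast
  qed
  have s: "(\<lambda>v. c * f v) \<in> W n" if "f \<in> W n" for f c
  proof -
    have "f \<in> ell2" using that by (auto simp: W_def)
    then have "(\<lambda>v. c * f v) \<in> ell2" by (rule ell2_scale)
    moreover have "restr r (\<lambda>v. c * f v) = (\<lambda>v. 0)" if "r < n" for r
      using \<open>f \<in> W n\<close> that by (simp add: W_def restr_scale)
    moreover have "restr r (\<lambda>v. c * f v) \<in> Usp par v0 n r" if "n \<le> r" for r
    proof -
      have "restr r f \<in> Usp par v0 n r"
        using \<open>f \<in> W n\<close> that by (auto simp: W_def)
      then show ?thesis using U[of r] unfolding linsub_def restr_scale by blast
    qed
    ultimately show ?thesis unfolding W_def by blast
  qed
  show ?thesis unfolding linsub_def using z a s by blast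
qed

lemma W_closed: "closed_subspace (W n)"
proof (rule csI)
  show "W n \<subseteq> ell2" unfolding W_def by auto
next
  fix s f assume a: "\<And>k. s k \<in> W n" "f \<in> ell2" "(\<lambda>k. l2norm (\<lambda>v. s k v - f v)) \<longlonglongrightarrow> 0"
  then have pw: "\<forall>v. (\<lambda>k. s k v) \<longlonglongrightarrow> f v" by (intro allI pw_conv) (auto simp: W_def)
  have "restr r f = (\<lambda>v. 0)" if "r < n" for r
  proof -
    have "restr r (s k) \<in> {\<lambda>v. 0}" for k using a that by (auto simp: W_def)
    then have "restr r f \<in> {\<lambda>v. 0}"
      using pwclosed_zero[unfolded pwclosed_def, rule_format, of "\<lambda>k. restr r (s k)" "restr r f"]
        restr_tendsto[OF pw] by blast
    then show ?thesis by simp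
  qed
  moreover have "restr r f \<in> Usp par v0 n r" if "n \<le> r" for r
  proof -
    have "restr r (s k) \<in> Usp par v0 n r" for k using a that by (auto simp: W_def)
    then show ?thesis
      using pwclosed_Usp[OF that, unfolded pwclosed_def, rule_format, of "\<lambda>k. restr r (s k)" "restr r f"]
        restr_tendsto[OF pw] by blast
  qed
  ultimately show "f \<in> W n" using a by (auto simp: W_def)
qed (use W_linsub in \<open>simp_all add: linsub_def\<close>)

lemma tail_lim:
  assumes "f \<in> ell2"
  shows "(\<lambda>R. l2norm (\<lambda>v. (if dep v < R then f v else 0) - f v)) \<longlonglongrightarrow> 0"
proof -
  define g where "g v = (cmod (f v))^2" for v
  have gs: "g summable_on UNIV" using assms unfolding ell2_def g_def by simp
  define G where "G = infsum g UNIV"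
  have bnd: "\<exists>R0. \<forall>R\<ge>R0. X \<subseteq> {v. dep v < R}" if fX: "finite X" for X
  proof -
    obtain k where "dep ` X \<subseteq> {..<k}" using finite_nat_bounded[OF finite_imageI[OF fX]] by blast
    then have "\<forall>R\<ge>k. X \<subseteq> {v. dep v < R}"
    proof (intro allI impI subsetI)
      fix R x assume "dep ` X \<subseteq> {..<k}" "k \<le> R" "x \<in> X"
      then have "dep x < k" by blast
      then show "x \<in> {v. dep v < R}" using \<open>k \<le> R\<close> by simp
    qed
    then show ?thesis by blast
  qed
  have lim: "(\<lambda>R. sum g {v. dep v < R}) \<longlonglongrightarrow> G"
    unfolding G_def by (rule exhaust_lim[OF has_sum_infsum[OF gs] finite_B bnd])
  have eq: "infsum (\<lambda>v. (cmod ((if dep v < R then f v else 0) - f v))^2) UNIV = G - sum g {v. dep v < R}" for R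
  proof -
    define tlf where "tlf v = (if dep v < R then 0 else g v)" for v
    define ind where "ind v = (if dep v < R then g v else 0)" for v
    have e1: "(\<lambda>v. (cmod ((if dep v < R then f v else 0) - f v))^2) = tlf"
      by (auto simp: tlf_def g_def fun_eq_iff)
    have ts: "tlf summable_on UNIV"
      by (rule summable_on_comparison_test[OF gs]) (auto simp: tlf_def g_def)
    have ins: "ind summable_on UNIV"
      by (rule fin_summable[OF finite_B[of R]]) (auto simp: ind_def)
    have ii: "infsum ind UNIV = sum g {v. dep v < R}"
      by (subst infsum_fin[OF finite_B[of R]]) (auto simp: ind_def intro!: sum.cong)
    have "G = infsum (\<lambda>v. tlf v + ind v) UNIV"
      unfolding G_def by (intro infsum_cong) (auto simp: tlf_def ind_def)
    also have "\<dots> = infsum tlf UNIV + infsum ind UNIV"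
      by (rule infsum_add[OF ts ins])
    finally show ?thesis using e1 ii by simp
  qed
  have "(\<lambda>R. G - sum g {v. dep v < R}) \<longlonglongrightarrow> G - G"
    by (rule tendsto_diff[OF tendsto_const lim])
  then have "(\<lambda>R. G - sum g {v. dep v < R}) \<longlonglongrightarrow> 0" by simp
  then have "(\<lambda>R. sqrt (G - sum g {v. dep v < R})) \<longlonglongrightarrow> sqrt 0"
    by (rule tendsto_real_sqrt)
  then show ?thesis unfolding l2norm_def eq by simp
qed

lemma trunc_in:
  assumes C: "closed_subspace C" and f: "f \<in> ell2" and r: "\<And>r. restr r f \<in> C"
  shows "f \<in> C"
proof -
  define t where "t R = (\<lambda>v. if dep v < R then f v else 0)" for R
  have L: "linsub C" using C by (rule closed_linsub)
  have tC: "t R \<in> C" for R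
  proof (induction R)
    case 0
    then show ?case using L by (simp add: t_def linsub_def)
  next
    case (Suc R)
    have "t (Suc R) = (\<lambda>v. t R v + restr R f v)"
      by (auto simp: t_def restr_def fun_eq_iff)
    then show ?case using Suc r[of R] L unfolding linsub_def by simp
  qed
  have "(\<lambda>R. l2norm (\<lambda>v. t R v - f v)) \<longlonglongrightarrow> 0"
    unfolding t_def using tail_lim[OF f] by simp
  then show ?thesis using cs_lim[of C t f] C tC f by blast
qed

lemma Vsp_W: "Vsp par v0 n = W n"
proof
  have "Usp par v0 n r \<subseteq> W n" if "n \<le> r" for r
  proof
    fix f assume f: "f \<in> Usp par v0 n r"
    then have fe: "f \<in> eS r" using Usp_eS that by blast
    have "restr r' f = (if r' = r then f else (\<lambda>v. 0))" for r'
      using fe by (auto simp: restr_def eS_def fun_eq_iff)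
    then show "f \<in> W n" unfolding W_def using f fe eS_ell2 that linsub_Usp
      by (auto simp: linsub_def)
  qed
  then show "Vsp par v0 n \<subseteq> W n" unfolding Vsp_def
    by (intro closed_span_least W_closed) auto
next
  have sub: "(\<Union>r\<in>{n..}. Usp par v0 n r) \<subseteq> ell2" using Usp_eS eS_ell2 by fastforce
  have C: "closed_subspace (Vsp par v0 n)" unfolding Vsp_def by (rule closed_span_closed[OF sub])
  show "W n \<subseteq> Vsp par v0 n"
  proof
    fix f assume f: "f \<in> W n"
    have "restr r f \<in> Vsp par v0 n" for r
    proof (cases "r < n")
      case True
      then show ?thesis using f closed_linsub[OF C] by (auto simp: W_def linsub_def)
    next
      case False
      then have "restr r f \<in> Usp par v0 n r" using f by (auto simp: W_def)
      then show ?thesis using False closed_span_sup unfolding Vsp_def by fastforce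
    qed
    then show "f \<in> Vsp par v0 n" using trunc_in[OF C] f by (auto simp: W_def)
  qed
qed

end

definition delta :: "'a \<Rightarrow> 'a \<Rightarrow> complex" where "delta a = (\<lambda>v. if v = a then 1 else 0)"
definition ipS :: "'a set \<Rightarrow> ('a \<Rightarrow> complex) \<Rightarrow> ('a \<Rightarrow> complex) \<Rightarrow> complex" where
  "ipS S g f = (\<Sum>v\<in>S. cnj (g v) * f v)"
definition Z :: "'a set \<Rightarrow> ('a \<Rightarrow> complex) set" where "Z S = {f. \<forall>v. v \<notin> S \<longrightarrow> f v = 0}"

lemma sum_fun_apply: "(sum h A) v = sum (\<lambda>a. h a v) A"
  by (induction A rule: infinite_finite_induct) auto

lemma Z_subspace: "cvs.subspace (Z S)"
  by (rule linsub_subspace) (auto simp: linsub_def Z_def)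

lemma Z_span:
  assumes "finite S"
  shows "Z S \<subseteq> cvs.span (delta ` S)"
proof
  fix f assume f: "f \<in> Z S"
  have "f = (\<Sum>a\<in>S. csc (f a) (delta a))"
  proof
    fix v
    show "f v = (\<Sum>a\<in>S. csc (f a) (delta a)) v"
    proof (cases "v \<in> S")
      case True
      have "(\<Sum>a\<in>S. csc (f a) (delta a)) v = (\<Sum>a\<in>S. if a = v then f a else 0)"
        unfolding sum_fun_apply by (intro sum.cong) (auto simp: csc_def delta_def)
      also have "\<dots> = f v" using True assms by simp
      finally show ?thesis by simp
    next
      case False
      have "(\<Sum>a\<in>S. csc (f a) (delta a)) v = (\<Sum>a\<in>S. 0)"
        unfolding sum_fun_apply using False by (intro sum.cong) (auto simp: csc_def delta_def)
      then show ?thesis using False f by (simp add: Z_def)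
    qed
  qed
  also have "\<dots> \<in> cvs.span (delta ` S)"
    by (intro cvs.span_sum cvs.span_scale cvs.span_base) auto
  finally show "f \<in> cvs.span (delta ` S)" .
qed

lemma fin_basis:
  assumes "finite S" "G \<subseteq> Z S"
  shows "\<exists>B. finite B \<and> B \<subseteq> G \<and> G \<subseteq> cvs.span B"
proof -
  obtain B where B: "B \<subseteq> G" "cvs.independent B" "G \<subseteq> cvs.span B"
    using cvs.maximal_independent_subset[of G] by blast
  have "B \<subseteq> cvs.span (delta ` S)" using B(1) assms(2) Z_span[OF assms(1)] by blast
  then have "finite B" using cvs.independent_span_bound[OF finite_imageI[OF assms(1)] B(2)] by blast
  then show ?thesis using B by blast
qed

lemma ipS_add2: "ipS S g (f1 + f2) = ipS S g f1 + ipS S g f2"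
  by (simp add: ipS_def sum.distrib distrib_left)
lemma ipS_diff2: "ipS S g (f1 - f2) = ipS S g f1 - ipS S g f2"
  by (simp add: ipS_def sum_subtractf right_diff_distrib)
lemma ipS_scale2: "ipS S g (csc c f) = c * ipS S g f"
  by (simp add: ipS_def csc_def sum_distrib_left algebra_simps)
lemma ipS_add1: "ipS S (f1 + f2) g = ipS S f1 g + ipS S f2 g"
  by (simp add: ipS_def sum.distrib distrib_right)
lemma ipS_scale1: "ipS S (csc c f) g = cnj c * ipS S f g"
  by (simp add: ipS_def csc_def sum_distrib_left algebra_simps)

lemma orth_sub: "cvs.subspace {g. ipS S g y = 0}"
  unfolding cvs.subspace_def
  by (auto simp: ipS_add1 ipS_scale1) (simp add: ipS_def)

lemma ipS_self0:
  assumes "finite S" "y \<in> Z S" "ipS S y y = 0"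
  shows "y = 0"
proof -
  have cz: "cnj z * z = of_real ((cmod z)^2)" for z :: complex
    using complex_norm_square[of z] by (simp add: mult.commute)
  have "ipS S y y = of_real (\<Sum>v\<in>S. (cmod (y v))^2)"
    unfolding ipS_def of_real_sum
    by (intro sum.cong refl) (rule cz)
  then have "(\<Sum>v\<in>S. (cmod (y v))^2) = 0" using assms(3) of_real_eq_0_iff by metis
  then have "\<forall>v\<in>S. (cmod (y v))^2 = 0" using assms(1) by (subst (asm) sum_nonneg_eq_0_iff) auto
  then show ?thesis using assms(2) by (auto simp: Z_def fun_eq_iff)
qed

lemma OD_fin:
  assumes "finite S" "finite B" "B \<subseteq> Z S" "f \<in> Z S"
  shows "\<exists>x\<in>cvs.span B. \<forall>g\<in>B. ipS S g (f - x) = 0"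
  using assms(2,3,4)
proof (induction B arbitrary: f rule: finite_induct)
  case empty
  then show ?case using cvs.span_zero by blast
next
  case (insert b B)
  have spZ: "cvs.span B \<subseteq> Z S" using insert.prems(1) Z_subspace by (intro cvs.span_minimal) auto
  have spI: "cvs.span B \<subseteq> cvs.span (insert b B)" by (rule cvs.span_mono) auto
  obtain x where x: "x \<in> cvs.span B" "\<forall>g\<in>B. ipS S g (f - x) = 0"
    using insert.IH[of f] insert.prems by blast
  have bZ: "b \<in> Z S" using insert.prems by blast
  obtain x' where x': "x' \<in> cvs.span B" "\<forall>g\<in>B. ipS S g (b - x') = 0"
    using insert.IH[of b] insert.prems by blast
  define y where "y = f - x"
  define y' where "y' = b - x'"
  have yZ: "y \<in> Z S" "y' \<in> Z S" unfolding y_def y'_def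
    using x(1) x'(1) spZ insert.prems(2) bZ cvs.subspace_diff[OF Z_subspace] by blast+
  have orth_span: "ipS S z w = 0" if "z \<in> cvs.span B" "\<forall>g\<in>B. ipS S g w = 0" for z w
  proof -
    have "cvs.span B \<subseteq> {g. ipS S g w = 0}" using that(2) orth_sub by (intro cvs.span_minimal) auto
    then show ?thesis using that(1) by blast
  qed
  show ?case
  proof (cases "ipS S y' y' = 0")
    case True
    then have "y' = 0" using ipS_self0[OF assms(1) yZ(2)] by blast
    then have "b = x'" unfolding y'_def by simp
    then have "ipS S b (f - x) = 0" using orth_span[OF x'(1) x(2)] by simp
    then show ?thesis using x spI by blast
  next
    case False
    define c where "c = ipS S y' y / ipS S y' y'"
    define x'' where "x'' = x + csc c y'"
    have fx: "f - x'' = y - csc c y'" unfolding x''_def y_def by (simp add: algebra_simps)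
    have "b \<in> cvs.span (insert b B)" by (rule cvs.span_base) simp
    moreover have "x' \<in> cvs.span (insert b B)" using x'(1) spI by blast
    ultimately have "y' \<in> cvs.span (insert b B)" unfolding y'_def by (rule cvs.span_diff)
    then have "x'' \<in> cvs.span (insert b B)" unfolding x''_def
      using x(1) spI by (intro cvs.span_add cvs.span_scale) auto
    moreover have "ipS S g (f - x'') = 0" if "g \<in> B" for g
      using x(2) x'(2) that unfolding fx ipS_diff2 ipS_scale2 y_def y'_def by simp
    moreover have "ipS S b (f - x'') = 0"
    proof -
      have b: "b = x' + y'" unfolding y'_def by simp
      have "ipS S x' y = 0" using orth_span[OF x'(1)] x(2) unfolding y_def by blast
      moreover have "ipS S x' y' = 0" using orth_span[OF x'(1)] x'(2) unfolding y'_def by blast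
      ultimately have "ipS S b (f - x'') = ipS S y' y - c * ipS S y' y'"
        unfolding fx b ipS_add1 ipS_diff2 ipS_scale2 by simp
      also have "\<dots> = 0" unfolding c_def using False by simp
      finally show ?thesis .
    qed
    ultimately show ?thesis by blast
  qed
qed

lemma OD:
  assumes "finite S" "G \<subseteq> Z S" "f \<in> Z S"
  shows "\<exists>x\<in>cvs.span G. \<forall>g\<in>G. ipS S g (f - x) = 0"
proof -
  obtain B where B: "finite B" "B \<subseteq> G" "G \<subseteq> cvs.span B" using fin_basis[OF assms(1,2)] by blast
  obtain x where x: "x \<in> cvs.span B" "\<forall>g\<in>B. ipS S g (f - x) = 0"
    using OD_fin[OF assms(1) B(1) _ assms(3)] B(2) assms(2) by blast
  have "cvs.span B \<subseteq> {g. ipS S g (f - x) = 0}" using x(2) orth_sub by (intro cvs.span_minimal) auto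
  moreover have "cvs.span B \<subseteq> cvs.span G" using B(2) by (rule cvs.span_mono)
  ultimately show ?thesis using x(1) B(3) by blast
qed

context sst begin

lemma eS_Z: "eS r = Z {v. dep v = r}" by (auto simp: eS_def Z_def)
lemma ip_ipS: "ip r f g = ipS {v. dep v = r} f g" by (simp add: ip_def ipS_def)

lemma D:
  assumes f: "f \<in> eS r"
  shows "f \<in> cvs.span (\<Union>n\<in>{..r}. Usp par v0 n r)"
proof (cases r)
  case 0
  have "Usp par v0 0 0 = eS 0" by (simp add: Usp_UU UU_0)
  then have "f \<in> (\<Union>n\<in>{..r}. Usp par v0 n r)" using f 0 by auto
  then show ?thesis by (rule cvs.span_base)
next
  case (Suc m)
  define G where "G = (\<Union>n\<in>{..m}. Usp par v0 n (Suc m))"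
  have GE: "G \<subseteq> eS (Suc m)"
  proof
    fix g assume "g \<in> G"
    then obtain n where "n \<le> m" "g \<in> Usp par v0 n (Suc m)" unfolding G_def by auto
    then show "g \<in> eS (Suc m)" using Usp_eS[of n "Suc m"] by auto
  qed
  have fZ: "f \<in> Z {v. dep v = Suc m}" using f Suc eS_Z by simp
  obtain x where x: "x \<in> cvs.span G" "\<forall>g\<in>G. ipS {v. dep v = Suc m} g (f - x) = 0"
    using OD[OF finite_S _ fZ] GE eS_Z by metis
  have sub: "cvs.subspace (eS (Suc m))" by (rule linsub_subspace[OF linsub_eS])
  have "cvs.span G \<subseteq> eS (Suc m)" by (rule cvs.span_minimal[OF GE sub])
  then have xE: "x \<in> eS (Suc m)" using x(1) by blast
  define y where "y = f - x"
  have yE: "y \<in> eS (Suc m)" unfolding y_def using f Suc xE cvs.subspace_diff[OF sub] by simp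
  have "ip (Suc m) ((H ^^ (Suc m - k)) a) y = 0" if "k \<le> m" "a \<in> UU k" for k a
  proof -
    have "(H ^^ (Suc m - k)) a \<in> G" unfolding G_def Usp_UU using that by auto
    then show ?thesis using x(2) unfolding ip_ipS y_def by blast
  qed
  then have "y \<in> UU (Suc m)" unfolding UU_Suc' using yE by blast
  then have yU: "y \<in> Usp par v0 (Suc m) (Suc m)" by (simp add: Usp_UU)
  have "G \<subseteq> (\<Union>n\<in>{..r}. Usp par v0 n r)" unfolding G_def Suc by (rule UN_mono) auto
  then have "x \<in> cvs.span (\<Union>n\<in>{..r}. Usp par v0 n r)" using x(1) cvs.span_mono by blast
  moreover have "y \<in> cvs.span (\<Union>n\<in>{..r}. Usp par v0 n r)"
    using yU Suc by (intro cvs.span_base) auto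
  ultimately have "x + y \<in> cvs.span (\<Union>n\<in>{..r}. Usp par v0 n r)" by (rule cvs.span_add)
  then show ?thesis unfolding y_def by simp
qed

lemma eS_in_closed:
  assumes C: "closed_subspace C" and U: "\<And>n. n \<le> r \<Longrightarrow> Usp par v0 n r \<subseteq> C"
  shows "eS r \<subseteq> C"
proof -
  have "(\<Union>n\<in>{..r}. Usp par v0 n r) \<subseteq> C" using U by auto
  then have "cvs.span (\<Union>n\<in>{..r}. Usp par v0 n r) \<subseteq> C"
    by (rule cvs.span_minimal[OF _ linsub_subspace[OF closed_linsub[OF C]]])
  then show ?thesis using D by blast
qed

lemma ell2_in_closed:
  assumes C: "closed_subspace C" and U: "\<And>n r. n \<le> r \<Longrightarrow> Usp par v0 n r \<subseteq> C"
  shows "ell2 \<subseteq> C"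
proof
  fix f :: "'v \<Rightarrow> complex" assume f: "f \<in> ell2"
  have "restr r f \<in> C" for r using eS_in_closed[OF C U] restr_eS by blast
  then show "f \<in> C" by (rule trunc_in[OF C f])
qed

definition "Hs f = (\<lambda>u. \<Sum>w\<in>ch u. f w)"

lemma adj_eq: "adjacency par v0 f = (\<lambda>v. H f v + Hs f v)"
  by (simp add: adjacency_def Hop_def Hs_def)

definition "M = (SOME M. \<forall>r. d r \<le> M)"
lemma M: "d r \<le> M"
proof -
  have "\<forall>r. d r \<le> M" unfolding M_def by (rule someI_ex) (rule bdd)
  then show ?thesis by blast
qed

lemma ch_card_le: "card (ch u) \<le> M" using ch_card M by simp

lemma H_ell2:
  assumes f: "f \<in> ell2"
  shows "H f \<in> ell2"
proof -
  define g where "g v = (cmod (f v))^2" for v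
  have gs: "g summable_on UNIV" using f unfolding ell2_def g_def by simp
  define G where "G = infsum g UNIV"
  have bound: "(\<Sum>v\<in>F. (cmod (H f v))^2) \<le> real M * G" if F: "finite F" for F
  proof -
    have "(\<Sum>v\<in>F. (cmod (H f v))^2) = (\<Sum>u\<in>par ` F. \<Sum>v\<in>{v\<in>F. par v = u}. (cmod (H f v))^2)"
      by (rule sum.image_gen[OF F])
    also have "\<dots> \<le> (\<Sum>u\<in>par ` F. real M * g u)"
    proof (rule sum_mono)
      fix u assume "u \<in> par ` F"
      have "(\<Sum>v\<in>{v\<in>F. par v = u}. (cmod (H f v))^2) = (\<Sum>v\<in>{v\<in>F. par v = u}. if v \<noteq> v0 then g u else 0)"
        by (intro sum.cong refl) (auto simp: H_apply g_def)
      also have "\<dots> = (\<Sum>v\<in>{v \<in> {v\<in>F. par v = u}. v \<noteq> v0}. g u)"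
        by (rule sum.inter_filter[symmetric]) (use F in simp)
      also have "\<dots> = real (card {v \<in> {v\<in>F. par v = u}. v \<noteq> v0}) * g u" by simp
      also have "\<dots> \<le> real M * g u"
      proof (rule mult_right_mono)
        have "{v \<in> {v\<in>F. par v = u}. v \<noteq> v0} \<subseteq> ch u" by (auto simp: ch_iff)
        then have "card {v \<in> {v\<in>F. par v = u}. v \<noteq> v0} \<le> card (ch u)" by (rule card_mono[OF ch_fin])
        then show "real (card {v \<in> {v\<in>F. par v = u}. v \<noteq> v0}) \<le> real M" using ch_card_le[of u] by simp
      qed (simp add: g_def)
      finally show "(\<Sum>v\<in>{v\<in>F. par v = u}. (cmod (H f v))^2) \<le> real M * g u" .
    qed
    also have "\<dots> = real M * (\<Sum>u\<in>par ` F. g u)" by (simp add: sum_distrib_left)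
    also have "\<dots> \<le> real M * G"
      unfolding G_def by (intro mult_left_mono finite_sum_le_infsum gs) (auto simp: F g_def)
    finally show ?thesis .
  qed
  have "(\<lambda>v. (cmod (H f v))^2) summable_on UNIV"
  proof (rule nonneg_bdd_above_summable_on)
    show "bdd_above (sum (\<lambda>v. (cmod (H f v))^2) ` {F. F \<subseteq> UNIV \<and> finite F})"
      using bound by (intro bdd_aboveI2[of _ _ "real M * G"]) auto
  qed simp
  then show ?thesis unfolding ell2_def by simp
qed

lemma Hs_ell2:
  assumes f: "f \<in> ell2"
  shows "Hs f \<in> ell2"
proof -
  define g where "g v = (cmod (f v))^2" for v
  have gs: "g summable_on UNIV" using f unfolding ell2_def g_def by simp
  define G where "G = infsum g UNIV"
  have pt: "(cmod (Hs f u))^2 \<le> real M * (\<Sum>w\<in>ch u. g w)" for u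
  proof -
    have "cmod (Hs f u) \<le> (\<Sum>w\<in>ch u. cmod (f w))" unfolding Hs_def by (rule norm_sum)
    then have "(cmod (Hs f u))^2 \<le> (\<Sum>w\<in>ch u. cmod (f w))^2" by (intro power_mono) auto
    also have "\<dots> = (\<Sum>w\<in>ch u. 1 * cmod (f w))^2" by simp
    also have "\<dots> \<le> (\<Sum>w\<in>ch u. 1^2) * (\<Sum>w\<in>ch u. (cmod (f w))^2)"
      by (rule Cauchy_Schwarz_ineq_sum)
    also have "\<dots> = real (card (ch u)) * (\<Sum>w\<in>ch u. g w)" by (simp add: g_def)
    also have "\<dots> \<le> real M * (\<Sum>w\<in>ch u. g w)"
      using ch_card_le[of u] by (intro mult_right_mono) (auto simp: g_def intro: sum_nonneg)
    finally show ?thesis .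
  qed
  have bound: "(\<Sum>u\<in>F. (cmod (Hs f u))^2) \<le> real M * G" if F: "finite F" for F
  proof -
    have "(\<Sum>u\<in>F. (cmod (Hs f u))^2) \<le> (\<Sum>u\<in>F. real M * (\<Sum>w\<in>ch u. g w))"
      by (rule sum_mono) (rule pt)
    also have "\<dots> = real M * (\<Sum>u\<in>F. \<Sum>w\<in>ch u. g w)" by (simp add: sum_distrib_left)
    also have "(\<Sum>u\<in>F. \<Sum>w\<in>ch u. g w) = (\<Sum>w\<in>(\<Union>u\<in>F. ch u). g w)"
      by (rule sum.UNION_disjoint[symmetric]) (auto simp: F ch_fin ch_iff)
    also have "real M * \<dots> \<le> real M * G"
      unfolding G_def using F ch_fin
      by (intro mult_left_mono finite_sum_le_infsum gs) (auto simp: g_def)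
    finally show ?thesis .
  qed
  have "(\<lambda>v. (cmod (Hs f v))^2) summable_on UNIV"
  proof (rule nonneg_bdd_above_summable_on)
    show "bdd_above (sum (\<lambda>v. (cmod (Hs f v))^2) ` {F. F \<subseteq> UNIV \<and> finite F})"
      using bound by (intro bdd_aboveI2[of _ _ "real M * G"]) auto
  qed simp
  then show ?thesis unfolding ell2_def by simp
qed

lemma delta_ell2: "delta u \<in> ell2"
  by (rule ell2_fin[of "{u}"]) (auto simp: delta_def)

lemma H_delta: "H (delta u) = (\<lambda>v. if v \<in> ch u then 1 else 0)"
  by (auto simp: H_apply delta_def ch_iff fun_eq_iff)

lemma l2inner_delta: "l2inner (delta u) h = h u"
  unfolding l2inner_def by (subst infsum_fin[of "{u}"]) (auto simp: delta_def)

lemma adjoint_eq: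
  assumes L: "is_adjoint H L" and g: "g \<in> ell2"
  shows "L g = Hs g"
proof
  fix u
  have A: "\<forall>f\<in>ell2. \<forall>g\<in>ell2. l2inner (H f) g = l2inner f (L g)"
    using L unfolding is_adjoint_def by (rule conjunct2)
  have "l2inner (H (delta u)) g = l2inner (delta u) (L g)"
    using bspec[OF bspec[OF A delta_ell2] g] .
  also have "\<dots> = L g u" by (rule l2inner_delta)
  finally have e: "L g u = l2inner (H (delta u)) g" by simp
  have "l2inner (H (delta u)) g = (\<Sum>w\<in>ch u. cnj (H (delta u) w) * g w)"
    unfolding l2inner_def by (rule infsum_fin[OF ch_fin]) (simp add: H_delta)
  also have "\<dots> = Hs g u" unfolding Hs_def H_delta by (intro sum.cong) auto
  finally show "L g u = Hs g u" using e by simp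
qed

lemma restr_H0: "restr 0 (H f) = (\<lambda>v. 0)"
  by (auto simp: restr_def H_apply dep0_iff fun_eq_iff)

lemma restr_HSuc: "restr (Suc r) (H f) = H (restr r f)"
proof
  fix v show "restr (Suc r) (H f) v = H (restr r f) v"
  proof (cases "v = v0")
    case True then show ?thesis by (simp add: restr_def H_apply)
  next
    case False then show ?thesis using dep_par[OF False] by (simp add: restr_def H_apply)
  qed
qed

lemma restr_Hs: "restr r (Hs f) = Hs (restr (Suc r) f)"
proof
  fix u
  have "Hs (restr (Suc r) f) u = (\<Sum>w\<in>ch u. if dep u = r then f w else 0)"
    unfolding Hs_def restr_def by (intro sum.cong refl) (simp add: ch_dep)
  then show "restr r (Hs f) u = Hs (restr (Suc r) f) u" by (simp add: restr_def Hs_def)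
qed

lemma H_zero: "H (\<lambda>v. 0) = (\<lambda>v. 0)" by (simp add: Hop_def)
lemma Hs_zero: "Hs (\<lambda>v. 0) = (\<lambda>v. 0)" by (simp add: Hs_def)

lemma Hs_H:
  assumes b: "b \<in> eS r"
  shows "Hs (H b) = (\<lambda>v. of_nat (d r) * b v)"
proof
  fix u
  have "Hs (H b) u = (\<Sum>w\<in>ch u. b u)"
    unfolding Hs_def by (intro sum.cong refl) (auto simp: H_apply ch_iff)
  also have "\<dots> = of_nat (d (dep u)) * b u" by (simp add: ch_card)
  also have "\<dots> = of_nat (d r) * b u" using b by (cases "dep u = r") (auto simp: eS_def)
  finally show "Hs (H b) u = of_nat (d r) * b u" .
qed

end

context sst begin

lemma H_add: "H (\<lambda>v. f v + g v) = (\<lambda>v. H f v + H g v)" by (simp add: Hop_def fun_eq_iff)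
lemma H_scale: "H (\<lambda>v. c * f v) = (\<lambda>v. c * H f v)" by (simp add: Hop_def fun_eq_iff)
lemma ip_add1: "ip r (\<lambda>v. f1 v + f2 v) g = ip r f1 g + ip r f2 g"
  by (simp add: ip_def sum.distrib distrib_right)
lemma ip_scale1: "ip r (\<lambda>v. c * f v) g = cnj c * ip r f g"
  by (simp add: ip_def sum_distrib_left algebra_simps)
lemma ip_zero1: "ip r (\<lambda>v. 0) g = 0" by (simp add: ip_def)

lemma Hs_UU:
  assumes a: "a \<in> UU (Suc m)"
  shows "Hs a = (\<lambda>v. 0)"
proof
  fix u
  have aE: "a \<in> eS (Suc m)" using UU_eS a by blast
  show "Hs a u = 0"
  proof (cases "dep u = m")
    case False
    then have "\<forall>w\<in>ch u. a w = 0" using aE ch_dep unfolding eS_def by auto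
    then show ?thesis by (simp add: Hs_def)
  next
    case True
    define C where "C = {h. ip (Suc m) (H h) a = 0}"
    have LC: "linsub C" unfolding linsub_def C_def
      by (simp add: H_zero H_add H_scale ip_zero1 ip_add1 ip_scale1)
    have UC: "Usp par v0 k m \<subseteq> C" if "k \<le> m" for k
    proof
      fix h assume "h \<in> Usp par v0 k m"
      then obtain b where b: "b \<in> UU k" "h = (H ^^ (m - k)) b" unfolding Usp_UU by blast
      have "H h = (H ^^ (Suc m - k)) b" using b(2) that by (simp add: Suc_diff_le)
      moreover have "ip (Suc m) ((H ^^ (Suc m - k)) b) a = 0"
        using a b(1) that unfolding UU_Suc' by blast
      ultimately show "h \<in> C" unfolding C_def by simp
    qed
    have "(\<Union>n\<in>{..m}. Usp par v0 n m) \<subseteq> C" using UC by blast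
    then have "cvs.span (\<Union>n\<in>{..m}. Usp par v0 n m) \<subseteq> C"
      by (rule cvs.span_minimal[OF _ linsub_subspace[OF LC]])
    moreover have "delta u \<in> eS m" using True by (auto simp: delta_def eS_def)
    ultimately have "delta u \<in> C" using D by blast
    then have z: "ip (Suc m) (H (delta u)) a = 0" unfolding C_def by simp
    have "ip (Suc m) (H (delta u)) a = (\<Sum>v\<in>{v. dep v = Suc m}. if v \<in> ch u then a v else 0)"
      unfolding ip_def H_delta by (intro sum.cong refl) simp
    also have "\<dots> = (\<Sum>v\<in>{v \<in> {v. dep v = Suc m}. v \<in> ch u}. a v)"
      by (rule sum.inter_filter[symmetric, OF finite_S])
    also have "{v \<in> {v. dep v = Suc m}. v \<in> ch u} = ch u" using True ch_dep by auto
    finally show ?thesis using z by (simp add: Hs_def)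
  qed
qed

lemma W_H:
  assumes f: "f \<in> W n"
  shows "H f \<in> W n"
proof -
  have fe: "f \<in> ell2" using f by (simp add: W_def)
  have LU: "linsub (Usp par v0 n r)" for r by (rule linsub_Usp)
  have "(r < n \<longrightarrow> restr r (H f) = (\<lambda>v. 0)) \<and> (n \<le> r \<longrightarrow> restr r (H f) \<in> Usp par v0 n r)" for r
  proof (cases r)
    case 0
    then show ?thesis using LU[of 0] unfolding linsub_def by (auto simp: restr_H0)
  next
    case (Suc r')
    show ?thesis
    proof (cases "r' < n")
      case True
      then have "restr r' f = (\<lambda>v. 0)" using f by (simp add: W_def)
      then have "restr r (H f) = (\<lambda>v. 0)" using Suc by (simp add: restr_HSuc H_zero)
      then show ?thesis using LU unfolding linsub_def by simp
    next
      case False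
      then have "restr r' f \<in> Usp par v0 n r'" using f by (simp add: W_def)
      then obtain b where b: "b \<in> UU n" "restr r' f = (H ^^ (r' - n)) b" unfolding Usp_UU by blast
      have "restr r (H f) = (H ^^ (r - n)) b" using b(2) Suc False by (simp add: restr_HSuc Suc_diff_le)
      then show ?thesis using b(1) Suc False unfolding Usp_UU by simp
    qed
  qed
  then show ?thesis using H_ell2[OF fe] by (simp add: W_def)
qed

lemma W_Hs:
  assumes f: "f \<in> W n"
  shows "Hs f \<in> W n"
proof -
  have fe: "f \<in> ell2" using f by (simp add: W_def)
  have LU: "linsub (Usp par v0 n r)" for r by (rule linsub_Usp)
  have "(r < n \<longrightarrow> restr r (Hs f) = (\<lambda>v. 0)) \<and> (n \<le> r \<longrightarrow> restr r (Hs f) \<in> Usp par v0 n r)" for r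
  proof -
    consider "Suc r < n" | "Suc r = n" | "n \<le> r" by linarith
    then show ?thesis
    proof cases
      case 1
      then have "restr (Suc r) f = (\<lambda>v. 0)" using f by (simp add: W_def)
      then show ?thesis using 1 by (simp add: restr_Hs Hs_zero)
    next
      case 2
      then have "restr (Suc r) f \<in> Usp par v0 (Suc r) (Suc r)" using f by (simp add: W_def)
      then have "restr (Suc r) f \<in> UU (Suc r)" by (simp add: Usp_UU)
      then have "Hs (restr (Suc r) f) = (\<lambda>v. 0)" by (rule Hs_UU)
      then show ?thesis using 2 by (simp add: restr_Hs)
    next
      case 3
      then have "restr (Suc r) f \<in> Usp par v0 n (Suc r)" using f by (simp add: W_def)
      then obtain b where b: "b \<in> UU n" "restr (Suc r) f = (H ^^ (Suc r - n)) b" unfolding Usp_UU by blast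
      define c where "c = (H ^^ (r - n)) b"
      have cU: "c \<in> Usp par v0 n r" unfolding c_def Usp_UU using b(1) by blast
      have cE: "c \<in> eS r" using cU Usp_eS[OF 3] by blast
      have "restr (Suc r) f = H c" using b(2) 3 unfolding c_def by (simp add: Suc_diff_le)
      then have "restr r (Hs f) = (\<lambda>v. of_nat (d r) * c v)" by (simp add: restr_Hs Hs_H[OF cE])
      moreover have "(\<lambda>v. of_nat (d r) * c v) \<in> Usp par v0 n r" using LU cU unfolding linsub_def by blast
      ultimately show ?thesis using 3 by simp
    qed
  qed
  then show ?thesis using Hs_ell2[OF fe] by (simp add: W_def)
qed

lemma ball_exhaust:
  assumes "(h has_sum s) UNIV"
  shows "(\<lambda>R. sum h {v. dep v < R}) \<longlonglongrightarrow> s"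
proof -
  have bnd: "\<exists>R0. \<forall>R\<ge>R0. X \<subseteq> {v. dep v < R}" if fX: "finite X" for X
  proof -
    obtain k where k: "dep ` X \<subseteq> {..<k}" using finite_nat_bounded[OF finite_imageI[OF fX]] by blast
    have "\<forall>R\<ge>k. X \<subseteq> {v. dep v < R}"
    proof (intro allI impI subsetI)
      fix R x assume "k \<le> R" "x \<in> X"
      then have "dep x < k" using k by blast
      then show "x \<in> {v. dep v < R}" using \<open>k \<le> R\<close> by simp
    qed
    then show ?thesis by blast
  qed
  show ?thesis by (rule exhaust_lim[OF assms finite_B bnd])
qed

lemma W_orth:
  assumes f: "f \<in> W n" and g: "g \<in> W m" and nm: "n \<noteq> m"
  shows "l2inner f g = 0"
proof -
  define h where "h v = cnj (f v) * g v" for v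
  have fe: "f \<in> ell2" and ge: "g \<in> ell2" using f g by (simp_all add: W_def)
  have "h summable_on UNIV" unfolding h_def by (rule prod_summable[OF fe ge])
  then have hs: "(h has_sum l2inner f g) UNIV" unfolding l2inner_def h_def[symmetric] by simp
  have sph: "sum h {v. dep v = R} = 0" for R
  proof -
    have e: "sum h {v. dep v = R} = ip R (restr R f) (restr R g)"
      unfolding ip_def h_def restr_def by (intro sum.cong refl) simp
    consider "R < n" | "R < m" | "n \<le> R" "m \<le> R" by linarith
    then show ?thesis
    proof cases
      case 1
      then have "restr R f = (\<lambda>v. 0)" using f by (simp add: W_def)
      then show ?thesis using e by (simp add: ip_zero1)
    next
      case 2
      then have "restr R g = (\<lambda>v. 0)" using g by (simp add: W_def)
      then show ?thesis using e by (simp add: ip_zero)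
    next
      case 3
      then have "restr R f \<in> Usp par v0 n R" "restr R g \<in> Usp par v0 m R" using f g by (simp_all add: W_def)
      then have "l2inner (restr R f) (restr R g) = 0" using Usp_orth[of n R m R] 3 nm by simp
      then show ?thesis using e l2inner_eS1[OF restr_eS] by simp
    qed
  qed
  have ball: "sum h {v. dep v < R} = 0" for R
  proof (induction R)
    case 0
    then show ?case by simp
  next
    case (Suc R)
    have "{v. dep v < Suc R} = {v. dep v < R} \<union> {v. dep v = R}" by auto
    moreover have "sum h ({v. dep v < R} \<union> {v. dep v = R}) = sum h {v. dep v < R} + sum h {v. dep v = R}"
      by (rule sum.union_disjoint[OF finite_B finite_S]) auto
    ultimately have "sum h {v. dep v < Suc R} = sum h {v. dep v < R} + sum h {v. dep v = R}" by simp
    then show ?case using Suc sph by simp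
  qed
  have "(\<lambda>R. sum h {v. dep v < R}) \<longlonglongrightarrow> l2inner f g" by (rule ball_exhaust[OF hs])
  then have "(\<lambda>R. 0::complex) \<longlonglongrightarrow> l2inner f g" using ball by simp
  then show ?thesis by (simp add: LIMSEQ_const_iff)
qed

end

context sst begin

lemma Usp_Vsp: "n \<le> r \<Longrightarrow> Usp par v0 n r \<subseteq> Vsp par v0 n"
  unfolding Vsp_def using closed_span_sup[of "\<Union>r\<in>{n..}. Usp par v0 n r"] by auto

lemma main:
  "(\<forall>n. closed_subspace (Vsp par v0 n))
     \<and> (\<forall>n m. n \<noteq> m \<longrightarrow> orth (Vsp par v0 n) (Vsp par v0 m))
     \<and> closed_span (\<Union>n. Vsp par v0 n) = ell2
     \<and> (\<forall>n r. n \<le> r \<longrightarrow> closed_subspace (Usp par v0 n r))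
     \<and> (\<forall>n r n' r'. n \<le> r \<and> n' \<le> r' \<and> (n, r) \<noteq> (n', r') \<longrightarrow>
          orth (Usp par v0 n r) (Usp par v0 n' r'))
     \<and> closed_span (\<Union>n. \<Union>r\<in>{n..}. Usp par v0 n r) = ell2
     \<and> (\<forall>n. \<forall>f\<in>Vsp par v0 n.
          Hop par v0 f \<in> Vsp par v0 n
          \<and> adjacency par v0 f \<in> Vsp par v0 n
          \<and> (\<forall>L. is_adjoint (Hop par v0) L \<longrightarrow> L f \<in> Vsp par v0 n))"
proof (intro conjI allI impI ballI)
  fix n show "closed_subspace (Vsp par v0 n)" by (simp add: Vsp_W W_closed)
next
  fix n m :: nat assume "n \<noteq> m"
  then show "orth (Vsp par v0 n) (Vsp par v0 m)" unfolding orth_def Vsp_W using W_orth by blast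
next
  define X where "X = (\<Union>n. Vsp par v0 n)"
  have Xe: "X \<subseteq> ell2" unfolding X_def Vsp_W W_def by blast
  show "closed_span (\<Union>n. Vsp par v0 n) = ell2"
  proof
    show "closed_span (\<Union>n. Vsp par v0 n) \<subseteq> ell2"
      using Xe unfolding X_def by (rule closed_span_least[OF closed_ell2])
    have "Usp par v0 n r \<subseteq> closed_span X" if "n \<le> r" for n r
      using Usp_Vsp[OF that] closed_span_sup[of X] unfolding X_def by blast
    then show "ell2 \<subseteq> closed_span (\<Union>n. Vsp par v0 n)"
      using ell2_in_closed[OF closed_span_closed[OF Xe]] unfolding X_def by blast
  qed
next
  fix n r :: nat assume "n \<le> r"
  then show "closed_subspace (Usp par v0 n r)" by (rule Usp_closed)
next
  fix n r n' r' :: nat assume "n \<le> r \<and> n' \<le> r' \<and> (n, r) \<noteq> (n', r')"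
  then show "orth (Usp par v0 n r) (Usp par v0 n' r')" unfolding orth_def using Usp_orth by blast
next
  define X where "X = (\<Union>n. \<Union>r\<in>{n..}. Usp par v0 n r)"
  have Xe: "X \<subseteq> ell2" unfolding X_def using Usp_eS eS_ell2 by fastforce
  show "closed_span (\<Union>n. \<Union>r\<in>{n..}. Usp par v0 n r) = ell2"
  proof
    show "closed_span (\<Union>n. \<Union>r\<in>{n..}. Usp par v0 n r) \<subseteq> ell2"
      using Xe unfolding X_def by (rule closed_span_least[OF closed_ell2])
    have "Usp par v0 n r \<subseteq> closed_span X" if "n \<le> r" for n r
      using that closed_span_sup[of X] unfolding X_def by auto
    then show "ell2 \<subseteq> closed_span (\<Union>n. \<Union>r\<in>{n..}. Usp par v0 n r)"
      using ell2_in_closed[OF closed_span_closed[OF Xe]] unfolding X_def by blast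
  qed
next
  fix n f assume "f \<in> Vsp par v0 n"
  then have f: "f \<in> W n" by (simp add: Vsp_W)
  then show "Hop par v0 f \<in> Vsp par v0 n" by (simp add: Vsp_W W_H)
next
  fix n f assume "f \<in> Vsp par v0 n"
  then have f: "f \<in> W n" by (simp add: Vsp_W)
  have "(\<lambda>v. H f v + Hs f v) \<in> W n"
    using W_linsub W_H[OF f] W_Hs[OF f] unfolding linsub_def by blast
  then show "adjacency par v0 f \<in> Vsp par v0 n" by (simp add: Vsp_W adj_eq)
next
  fix n f L assume "f \<in> Vsp par v0 n" "is_adjoint (Hop par v0) L"
  then have f: "f \<in> W n" by (simp add: Vsp_W)
  have "L f = Hs f" using adjoint_eq \<open>is_adjoint (Hop par v0) L\<close> f by (simp add: W_def)
  then show "L f \<in> Vsp par v0 n" using W_Hs[OF f] by (simp add: Vsp_W)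
qed

end

theorem proposition4p2:
  fixes par :: "'v \<Rightarrow> 'v" and v0 :: 'v and d :: "nat \<Rightarrow> nat"
  assumes rooted: "\<forall>v. \<exists>n. (par ^^ n) v = v0"
    and sph: "\<forall>v. finite (children par v0 v) \<and> card (children par v0 v) = d (depth par v0 v)"
    and deg2: "\<forall>r. 2 \<le> d r"
    and bdd: "\<exists>M. \<forall>r. d r \<le> M"
  shows
    "(\<forall>n. closed_subspace (Vsp par v0 n))
     \<and> (\<forall>n m. n \<noteq> m \<longrightarrow> orth (Vsp par v0 n) (Vsp par v0 m))
     \<and> closed_span (\<Union>n. Vsp par v0 n) = ell2
     \<and> (\<forall>n r. n \<le> r \<longrightarrow> closed_subspace (Usp par v0 n r))
     \<and> (\<forall>n r n' r'. n \<le> r \<and> n' \<le> r' \<and> (n, r) \<noteq> (n', r') \<longrightarrow>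
          orth (Usp par v0 n r) (Usp par v0 n' r'))
     \<and> closed_span (\<Union>n. \<Union>r\<in>{n..}. Usp par v0 n r) = ell2
     \<and> (\<forall>n. \<forall>f\<in>Vsp par v0 n.
          Hop par v0 f \<in> Vsp par v0 n
          \<and> adjacency par v0 f \<in> Vsp par v0 n
          \<and> (\<forall>L. is_adjoint (Hop par v0) L \<longrightarrow> L f \<in> Vsp par v0 n))"
proof -
  interpret sst par v0 d by (rule sst.intro[OF rooted sph deg2 bdd])
  show ?thesis by (rule main)
qed

end
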